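(* For every integer $i\ge1$, with $N=4^i+1$, there are exactly $2^{i-1}$ pairs $(A,B)$ of antipalindromic numbers with $N=A/B$.
   Context: A positive integer $n$ is antipalindromic if its binary representation $w=w_1\cdots w_L$ (most significant digit first, no leading zeros) has even length $L$ and satisfies $w_i+w_{L+1-i}=1$ for all $i$. *)

theory Defs
  imports Complex_Main
begin

fun bin_digits :: "nat \<Rightarrow> nat list" where
  "bin_digits n = (if n = 0 then [] else bin_digits (n div 2) @ [n mod 2])"

declare bin_digits.simps [simp del]

definition antipalindromic :: "nat \<Rightarrow> bool" where
  "antipalindromic n \<longleftrightarrow> n > 0 \<and>
     (let w = bin_digits n; L = length w in
        even L \<and> (\<forall>i\<in>{1..L}. w ! (i - 1) + w ! (L - i) = 1))"

end

theory Submission imports Defs begin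

lemma bit_ge: "x < 2^k \<Longrightarrow> k \<le> j \<Longrightarrow> \<not> bit (x::nat) j"
proof -
  assume "x < 2^k" "k \<le> j"
  then have "x < 2^j" by (meson order_less_le_trans one_le_numeral power_increasing)
  then show ?thesis by (simp add: bit_iff_odd)
qed

lemma bit_imp_ge: "bit (x::nat) k \<Longrightarrow> 2^k \<le> x"
  using bit_ge[of x k k] by (meson not_le order_refl)

lemma bit_top: "2^k \<le> (x::nat) \<Longrightarrow> x < 2^(Suc k) \<Longrightarrow> bit x k"
proof -
  assume a: "2^k \<le> x" "x < 2^(Suc k)"
  have "x div 2^k \<ge> 2^k div 2^k" using a(1) by (rule div_le_mono)
  then have "x div 2^k \<ge> 1" by simp
  moreover have "x div 2^k < 2" using a by (simp add: div_less_iff_less_mult mult.commute)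
  ultimately have "x div 2^k = 1" by linarith
  then show ?thesis by (simp add: bit_iff_odd)
qed

lemma bit_split: "(y::nat) < 2^i \<Longrightarrow> bit (x*2^i + y) j = (if j < i then bit y j else bit x (j - i))"
proof -
  assume y: "y < 2^i"
  show ?thesis
  proof (cases "j < i")
    case True
    have "take_bit i (x*2^i + y) = y" using y by (simp add: take_bit_eq_mod)
    then have "bit (take_bit i (x*2^i + y)) j = bit y j" by simp
    then show ?thesis using True by (simp add: bit_take_bit_iff)
  next
    case False
    have "(x*2^i + y) div 2^i = x" using y by simp
    then have "bit (drop_bit i (x*2^i + y)) (j - i) = bit x (j - i)" by (simp add: drop_bit_eq_div)
    then show ?thesis using False by (simp add: bit_drop_bit_eq)
  qed
qed

lemma bin_digits_props: "n > 0 \<Longrightarrow> length (bin_digits n) > 0 \<and> 2^(length (bin_digits n) - 1) \<le> n \<and> n < 2^(length (bin_digits n)) \<and>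
   (\<forall>p < length (bin_digits n). bin_digits n ! p = of_bool (bit n (length (bin_digits n) - 1 - p)))"
proof (induction n rule: bin_digits.induct)
  case (1 n)
  have eq: "bin_digits n = bin_digits (n div 2) @ [n mod 2]" using 1(2) by (simp add: bin_digits.simps)
  show ?case
  proof (cases "n div 2 = 0")
    case True
    then have "n = 1" using 1(2) by simp
    then show ?thesis using eq by (simp add: bin_digits.simps bit_0)
  next
    case False
    define l where "l = length (bin_digits (n div 2))"
    have IH: "l > 0" "2^(l-1) \<le> n div 2" "n div 2 < 2^l"
      "\<forall>p < l. bin_digits (n div 2) ! p = of_bool (bit (n div 2) (l - 1 - p))"
      using 1(1)[of] 1(2) False unfolding l_def by simp_all
    have len: "length (bin_digits n) = Suc l" using eq l_def by simp
    have "2^l \<le> n" using IH(1,2) by (cases l) auto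
    moreover have "n < 2^(Suc l)" using IH(3) by simp
    moreover have "\<forall>p < Suc l. bin_digits n ! p = of_bool (bit n (l - p))"
    proof (intro allI impI)
      fix p assume p: "p < Suc l"
      show "bin_digits n ! p = of_bool (bit n (l - p))"
      proof (cases "p < l")
        case True
        then have "bin_digits n ! p = of_bool (bit (n div 2) (l - 1 - p))" using eq IH(4) l_def by (simp add: nth_append)
        moreover have "l - p = Suc (l - 1 - p)" using True by simp
        ultimately show ?thesis by (simp add: bit_Suc)
      next
        case False
        then have "p = l" using p by simp
        then show ?thesis using eq l_def by (simp add: nth_append bit_0 odd_iff_mod_2_eq_one)
      qed
    qed
    ultimately show ?thesis using len by simp
  qed
qed

definition ap :: "nat \<Rightarrow> nat \<Rightarrow> bool" where
  "ap L n \<longleftrightarrow> L > 0 \<and> even L \<and> 2^(L-1) \<le> n \<and> n < 2^L \<and> (\<forall>j<L. bit n j \<noteq> bit n (L - 1 - j))"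

lemma len_unique: "L > 0 \<Longrightarrow> M > 0 \<Longrightarrow> 2^(L-1) \<le> (n::nat) \<Longrightarrow> n < 2^L \<Longrightarrow> 2^(M-1) \<le> n \<Longrightarrow> n < 2^M \<Longrightarrow> L = M"
proof -
  assume a: "L > 0" "M > 0" "2^(L-1) \<le> (n::nat)" "n < 2^L" "2^(M-1) \<le> n" "n < 2^M"
  have "(2::nat)^(L-1) < 2^M" using a(3,6) by linarith
  then have "L - 1 < M" by (rule power_less_imp_less_exp[rotated]) simp
  moreover have "(2::nat)^(M-1) < 2^L" using a(5,4) by linarith
  then have "M - 1 < L" by (rule power_less_imp_less_exp[rotated]) simp
  ultimately show ?thesis using a(1,2) by linarith
qed

lemma antipal_iff: "antipalindromic n \<longleftrightarrow> (\<exists>L. ap L n)"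
proof
  assume h: "antipalindromic n"
  define L where "L = length (bin_digits n)"
  have n0: "n > 0" using h antipalindromic_def by simp
  note P = bin_digits_props[OF n0, folded L_def]
  have ev: "even L" and c: "\<forall>i\<in>{1..L}. bin_digits n ! (i - 1) + bin_digits n ! (L - i) = 1"
    using h unfolding antipalindromic_def Let_def L_def by auto
  have "\<forall>j<L. bit n j \<noteq> bit n (L - 1 - j)"
  proof (intro allI impI)
    fix j assume j: "j < L"
    have "bin_digits n ! (Suc j - 1) + bin_digits n ! (L - Suc j) = 1" using c j by (intro c[rule_format]) auto
    moreover have "bin_digits n ! j = of_bool (bit n (L-1-j))" using P j by simp
    moreover have "bin_digits n ! (L - Suc j) = of_bool (bit n (L-1-(L - Suc j)))" using P j by simp
    ultimately have "of_bool (bit n (L - 1 - j)) + of_bool (bit n (L - 1 - (L - Suc j))) = (1::nat)"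
      by simp
    moreover have "L - 1 - (L - Suc j) = j" using j by simp
    ultimately show "bit n j \<noteq> bit n (L - 1 - j)" by (cases "bit n j"; cases "bit n (L - 1 - j)") auto
  qed
  then have "ap L n" using P ev unfolding ap_def by blast
  then show "\<exists>L. ap L n" by blast
next
  assume "\<exists>L. ap L n"
  then obtain L where a: "ap L n" by blast
  have "(0::nat) < 2^(L-1)" by simp
  then have n0: "n > 0" using a unfolding ap_def by linarith
  have P1: "length (bin_digits n) > 0" and P2: "2^(length (bin_digits n) - 1) \<le> n"
    and P3: "n < 2^(length (bin_digits n))"
    and P4: "\<forall>p < length (bin_digits n). bin_digits n ! p = of_bool (bit n (length (bin_digits n) - 1 - p))"
    using bin_digits_props[OF n0] by blast+
  have a1: "L > 0" "2^(L-1) \<le> n" "n < 2^L" using a unfolding ap_def by blast+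
  have LL: "L = length (bin_digits n)" by (rule len_unique[OF a1(1) P1 a1(2) a1(3) P2 P3])
  have "\<forall>i\<in>{1..L}. bin_digits n ! (i - 1) + bin_digits n ! (L - i) = 1"
  proof
    fix i assume i: "i \<in> {1..L}"
    have "i - 1 < length (bin_digits n)" "L - i < length (bin_digits n)" using i LL by auto
    then have "bin_digits n ! (i - 1) = of_bool (bit n (L - 1 - (i - 1)))"
     "bin_digits n ! (L - i) = of_bool (bit n (L - 1 - (L - i)))" using P4 unfolding LL[symmetric] by blast+
    moreover have "L - 1 - (L - i) = i - 1" "L - 1 - (i - 1) = L - 1 - (i - 1)" using i by auto
    moreover have "bit n (i - 1) \<noteq> bit n (L - 1 - (i - 1))" using a i unfolding ap_def by auto
    ultimately show "bin_digits n ! (i - 1) + bin_digits n ! (L - i) = 1" by auto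
  qed
  then show "antipalindromic n" using n0 a LL unfolding antipalindromic_def Let_def ap_def by auto
qed


lemma bit_div2: "bit ((a::nat) div 2^n) k = bit a (n+k)"
  by (simp add: bit_iff_odd div_exp_eq)

lemma ap_props: assumes "ap L n" shows "L > 0" "even L" "2^(L-1) \<le> n" "n < 2^L" "\<And>j. j < L \<Longrightarrow> bit n j \<noteq> bit n (L - 1 - j)"
  using assms unfolding ap_def by blast+

lemma ap_top: assumes "ap L n" shows "bit n (L - 1)"
proof -
  have "n < 2^(Suc (L-1))" using ap_props[OF assms] by simp
  then show ?thesis using bit_top ap_props(3)[OF assms] by blast
qed

lemma double_ap:
  assumes a: "ap m B" shows "ap (2*m) (B*2^m + B)"
proof -
  note P = ap_props[OF a]
  have bs: "\<And>j. bit (B*2^m + B) j = (if j < m then bit B j else bit B (j - m))"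
    using bit_split P(4) by blast
  have "(2::nat)^(2*m-1) = 2^(m-1)*2^m" using P(1) by (simp add: power_add[symmetric])
  also have "\<dots> \<le> B*2^m" using P(3) by simp
  finally have lo: "2^(2*m-1) \<le> B*2^m + B" by simp
  have "B \<le> 2^m - 1" using P(4) by simp
  then have "B*2^m + B \<le> (2^m - 1)*2^m + (2^m - 1)" by (intro add_mono mult_right_mono) auto
  also have "\<dots> < 2^m * 2^m" by (simp add: algebra_simps diff_mult_distrib)
  also have "\<dots> = 2^(2*m)" by (simp add: power_add[symmetric] mult_2)
  finally have hi: "B*2^m + B < 2^(2*m)" .
  have sym: "\<forall>j<2*m. bit (B*2^m + B) j \<noteq> bit (B*2^m + B) (2*m - 1 - j)"
  proof (intro allI impI)
    fix j assume j: "j < 2*m"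
    show "bit (B*2^m + B) j \<noteq> bit (B*2^m + B) (2*m - 1 - j)"
    proof (cases "j < m")
      case True
      have "bit B j \<noteq> bit B (m - 1 - j)" by (rule P(5)) (use True in simp)
      moreover have "2*m - 1 - j - m = m - 1 - j" by simp
      ultimately show ?thesis using bs True by simp
    next
      case False
      have "bit B (j - m) \<noteq> bit B (m - 1 - (j - m))" by (rule P(5)) (use False j in simp)
      moreover have "2*m - 1 - j = m - 1 - (j - m)" using False j by simp
      moreover have "m - 1 - (j - m) < m" using P(1) by simp
      ultimately show ?thesis using bs False by simp
    qed
  qed
  have "even (2*m)" "2*m > 0" using P(1) by simp_all
  then show ?thesis unfolding ap_def using lo hi sym by blast
qed

lemma main:
  assumes aB: "ap L B" and aA: "ap LA A" and AB: "A = B*2^m + B" and em: "even m" and m0: "m > 0"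
  shows "L = m"
proof -
  note PB = ap_props[OF aB]
  note PA = ap_props[OF aA]
  have "(2::nat)^(L-1+m) = 2^(L-1)*2^m" by (simp add: power_add)
  also have "\<dots> \<le> B*2^m" using PB(3) by simp
  also have "\<dots> \<le> A" using AB by simp
  finally have "(2::nat)^(L-1+m) < 2^LA" using PA(4) by linarith
  then have l1: "L - 1 + m < LA" by (rule power_less_imp_less_exp[rotated]) simp
  have "(2::nat)^L \<le> 2^(L+m)" by (rule power_increasing) simp_all
  then have "B < 2^(L+m)" using PB(4) by linarith
  moreover have "B*2^m < 2^(L+m)" using PB(4) by (simp add: power_add)
  ultimately have "A < 2^(L+m) + 2^(L+m)" using AB by linarith
  then have "(2::nat)^(LA-1) < 2^(Suc (L+m))" using PA(3) by simp
  then have l2: "LA - 1 < Suc (L + m)" by (rule power_less_imp_less_exp[rotated]) simp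
  have LA: "LA = L + m" using l1 l2 PA(2) PB(1,2) em by presburger
  have low: "\<And>j. j < m \<Longrightarrow> bit A j = bit B j"
  proof -
    fix j assume j: "j < m"
    have "take_bit m A = take_bit m B" using AB by (simp add: take_bit_eq_mod)
    then have "bit (take_bit m A) j = bit (take_bit m B) j" by simp
    then show "bit A j = bit B j" using j by (simp add: bit_take_bit_iff)
  qed
  have Adiv: "A div 2^m = B + B div 2^m" using AB by simp
  consider "L < m" | "L = m" | "m < L" by linarith
  then show ?thesis
  proof cases
    case 1
    have "\<not> bit B L" using bit_ge PB(4) by blast
    then have x: "\<not> bit A L" using low 1 by simp
    have "\<not> bit B (m - 1)" using bit_ge[OF PB(4)] 1 by simp
    then have y: "\<not> bit A (m - 1)" using low m0 by simp
    have "bit A L \<noteq> bit A (LA - 1 - L)" by (rule PA(5)) (use LA m0 in simp)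
    moreover have "LA - 1 - L = m - 1" using LA by simp
    ultimately show ?thesis using x y by simp
  next
    case 2 then show ?thesis .
  next
    case 3
    define n where "n = L - m"
    have n0: "n > 0" and Ln: "L = m + n" using 3 n_def by auto
    define D where "D = B div 2^m"
    define E where "E = B mod 2^n"
    have top: "A div 2^L = B div 2^n"
    proof (rule bit_eqI)
      fix k
      show "bit (A div 2^L) k = bit (B div 2^n) k"
      proof (cases "k < m")
        case True
        have "bit A (L+k) \<noteq> bit A (LA - 1 - (L+k))" by (rule PA(5)) (use LA True in simp)
        moreover have "LA - 1 - (L+k) = m - 1 - k" using LA True by simp
        moreover have "bit A (m - 1 - k) = bit B (m - 1 - k)" using low True by simp
        moreover have "bit B (m - 1 - k) \<noteq> bit B (L - 1 - (m - 1 - k))" by (rule PB(5)) (use 3 True in simp)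
        moreover have "L - 1 - (m - 1 - k) = n + k" using Ln True by simp
        ultimately show ?thesis by (simp add: bit_div2)
      next
        case False
        have "\<not> bit A (L+k)" using bit_ge[OF PA(4)] LA False by simp
        moreover have "\<not> bit B (n+k)" using bit_ge[OF PB(4)] Ln False by simp
        ultimately show ?thesis by (simp add: bit_div2)
      qed
    qed
    have "A div 2^L = (B + D) div 2^n" using Adiv D_def Ln by (simp add: div_exp_eq[symmetric])
    moreover have BD: "B + D = B div 2^n * 2^n + (E + D)" using div_mult_mod_eq[of B "2^n"] unfolding E_def by linarith
    ultimately have "B div 2^n = (B div 2^n * 2^n + (E + D)) div 2^n" using top by simp
    also have "\<dots> = B div 2^n + (E + D) div 2^n" by simp
    finally have "(E + D) div 2^n = 0" by simp
    then have FL: "E + D < 2^n" by (simp add: div_eq_0_iff)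
    define F where "F = E + D"
    have BDF: "A div 2^m = B div 2^n * 2^n + F" using Adiv BD unfolding F_def D_def by simp
    have bF: "\<And>j. j < n \<Longrightarrow> bit F j = bit A (m + j)"
    proof -
      fix j assume j: "j < n"
      have "bit (A div 2^m) j = bit F j" unfolding BDF using bit_split[of F n] FL F_def j by simp
      then show "bit F j = bit A (m + j)" by (simp add: bit_div2)
    qed
    have symF: "\<And>j. j < n \<Longrightarrow> bit F j \<noteq> bit F (n - 1 - j)"
    proof -
      fix j assume j: "j < n"
      have "bit A (m+j) \<noteq> bit A (LA - 1 - (m+j))" by (rule PA(5)) (use LA Ln j in simp)
      moreover have "LA - 1 - (m+j) = m + (n - 1 - j)" using LA Ln j by simp
      ultimately show "bit F j \<noteq> bit F (n - 1 - j)" using bF j by simp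
    qed
    have bE: "\<And>j. j < n \<Longrightarrow> bit E j = bit B j"
      unfolding E_def by (simp add: take_bit_eq_mod[symmetric] bit_take_bit_iff)
    have bD0: "bit D 0 = bit B m" unfolding D_def using bit_div2[of B m 0] by simp
    have "bit B (L - 1)" by (rule ap_top[OF aB])
    moreover have "bit B 0 \<noteq> bit B (L - 1 - 0)" by (rule PB(5)) (use PB(1) in simp)
    ultimately have "\<not> bit E 0" using bE n0 by simp
    then have evE: "even E" by (simp add: bit_0)
    have "(2::nat)^(n-1) * 2^m \<le> B" using PB(3) Ln n0 by (simp add: power_add[symmetric] add.commute)
    then have Dge: "2^(n-1) \<le> D" unfolding D_def by (simp add: less_eq_div_iff_mult_less_eq)
    show ?thesis
    proof (cases "bit B m")
      case True
      then have "odd D" using bD0 by (simp add: bit_0)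
      then have "odd F" using evE F_def by simp
      then have "bit F 0" by (simp add: bit_0)
      then have "\<not> bit F (n - 1)" using symF[of 0] n0 by simp
      moreover have "F < 2^(Suc (n-1))" using FL F_def n0 by simp
      ultimately have "F < 2^(n-1)" using bit_top by (meson not_le)
      then show ?thesis using Dge F_def by simp
    next
      case False
      have "bit B (n - 1) \<noteq> bit B (L - 1 - (n - 1))" by (rule PB(5)) (use Ln n0 in simp)
      moreover have "L - 1 - (n - 1) = m" using Ln n0 by simp
      ultimately have "bit E (n - 1)" using False bE n0 by simp
      then have "2^(n-1) \<le> E" by (rule bit_imp_ge)
      then have "2^(n-1) + 2^(n-1) \<le> E + D" using Dge by simp
      moreover have "(2::nat)^(n-1) + 2^(n-1) = 2^n" using n0 by (cases n) auto
      ultimately show ?thesis using FL by simp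
    qed
  qed
qed


lemma count_ap:
  assumes i1: "i \<ge> 1" shows "card {B. ap (2*i) B} = 2^(i-1)"
proof -
  define S where "S = {B. ap (2*i) B}"
  define f where "f = (\<lambda>B::nat. B div 2^i)"
  have lowbits: "\<And>B k. B \<in> S \<Longrightarrow> k < i \<Longrightarrow> bit B k = (\<not> bit (f B) (i - 1 - k))"
  proof -
    fix B k assume B: "B \<in> S" and k: "k < i"
    have a: "ap (2*i) B" using B S_def by simp
    have "bit B k \<noteq> bit B (2*i - 1 - k)" by (rule ap_props(5)[OF a]) (use k in simp)
    moreover have "2*i - 1 - k = i + (i - 1 - k)" using k by simp
    ultimately show "bit B k = (\<not> bit (f B) (i - 1 - k))" unfolding f_def by (simp add: bit_div2)
  qed
  have inj: "inj_on f S"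
  proof (rule inj_onI)
    fix x y assume x: "x \<in> S" and y: "y \<in> S" and e: "f x = f y"
    show "x = y"
    proof (rule bit_eqI)
      fix k
      show "bit x k = bit y k"
      proof (cases "k < i")
        case True
        then show ?thesis using lowbits[OF x True] lowbits[OF y True] e by simp
      next
        case False
        then have "k = i + (k - i)" by simp
        then have "bit x k = bit (f x) (k - i)" "bit y k = bit (f y) (k - i)"
          unfolding f_def by (metis bit_div2)+
        then show ?thesis using e by simp
      qed
    qed
  qed
  have img: "f ` S = {2^(i-1)..<2^i}"
  proof
    show "f ` S \<subseteq> {2^(i-1)..<2^i}"
    proof
      fix z assume "z \<in> f ` S"
      then obtain B where B: "B \<in> S" and z: "z = f B" by blast
      have a: "ap (2*i) B" using B S_def by simp
      note P = ap_props[OF a]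
      have "(2::nat)^(i-1) * 2^i = 2^(2*i-1)" using i1 by (simp add: power_add[symmetric] mult_2)
      then have "2^(i-1) * 2^i \<le> B" using P(3) by simp
      then have "2^(i-1) \<le> z" unfolding z f_def by (simp add: less_eq_div_iff_mult_less_eq)
      moreover have "B < 2^i * 2^i" using P(4) by (simp add: power_add[symmetric] mult_2)
      then have "z < 2^i" unfolding z f_def by (simp add: div_less_iff_less_mult)
      ultimately show "z \<in> {2^(i-1)..<2^i}" by simp
    qed
  next
    show "{2^(i-1)..<2^i} \<subseteq> f ` S"
    proof
      fix x :: nat assume x: "x \<in> {2^(i-1)..<2^i}"
      define bs where "bs = map (\<lambda>j. \<not> bit x (i - 1 - j)) [0..<i]"
      define y :: nat where "y = horner_sum of_bool 2 bs"
      have ylt: "y < 2^i" using horner_sum_of_bool_2_less[of bs] unfolding y_def bs_def by simp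
      have by_: "\<And>j. bit y j = (j < i \<and> \<not> bit x (i - 1 - j))"
        unfolding y_def bs_def by (auto simp add: bit_horner_sum_bit_iff)
      define B where "B = x * 2^i + y"
      have bB: "\<And>j. bit B j = (if j < i then \<not> bit x (i - 1 - j) else bit x (j - i))"
        unfolding B_def using bit_split[OF ylt] by_ by simp
      have fB: "f B = x" unfolding f_def B_def using ylt by simp
      have "(2::nat)^(2*i-1) = 2^(i-1) * 2^i" using i1 by (simp add: power_add[symmetric] mult_2)
      also have "\<dots> \<le> x * 2^i" using x by (intro mult_right_mono) auto
      also have "\<dots> \<le> B" unfolding B_def by simp
      finally have lo: "2^(2*i-1) \<le> B" .
      have "B < x * 2^i + 2^i" unfolding B_def using ylt by simp
      also have "\<dots> = (x + 1) * 2^i" by simp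
      also have "\<dots> \<le> 2^i * 2^i" using x by (intro mult_right_mono) auto
      also have "\<dots> = 2^(2*i)" by (simp add: power_add[symmetric] mult_2)
      finally have hi: "B < 2^(2*i)" .
      have sym: "\<forall>j<2*i. bit B j \<noteq> bit B (2*i - 1 - j)"
      proof (intro allI impI)
        fix j assume j: "j < 2*i"
        show "bit B j \<noteq> bit B (2*i - 1 - j)"
        proof (cases "j < i")
          case True
          then have "\<not> 2*i - 1 - j < i" "2*i - 1 - j - i = i - 1 - j" by auto
          then show ?thesis using bB True by simp
        next
          case False
          then have "2*i - 1 - j < i" "i - 1 - (2*i - 1 - j) = j - i" using j by auto
          then show ?thesis using bB False by simp
        qed
      qed
      have "even (2*i)" "2*i > 0" using i1 by simp_all
      then have "ap (2*i) B" unfolding ap_def using lo hi sym by blast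
      then have "B \<in> S" unfolding S_def by simp
      then show "x \<in> f ` S" using fB by force
    qed
  qed
  have "card S = card (f ` S)" using inj by (simp add: card_image)
  also have "\<dots> = 2^i - 2^(i-1)" using img by simp
  also have "\<dots> = 2^(i-1)" using i1 by (cases i) auto
  finally show ?thesis unfolding S_def .
qed

theorem theorem21:
  fixes i :: nat
  assumes "i \<ge> 1"
  shows "card {(A, B). antipalindromic A \<and> antipalindromic B \<and>
                 real (4 ^ i + 1) = real A / real B} = 2 ^ (i - 1)"
proof -
  have m: "(4::nat)^i = 2^(2*i)" by (simp add: power_mult)
  have eqset: "{(A, B). antipalindromic A \<and> antipalindromic B \<and> real (4 ^ i + 1) = real A / real B}
      = (\<lambda>B. (B * 2^(2*i) + B, B)) ` {B. ap (2*i) B}"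
  proof
    show "{(A, B). antipalindromic A \<and> antipalindromic B \<and> real (4 ^ i + 1) = real A / real B}
      \<subseteq> (\<lambda>B. (B * 2^(2*i) + B, B)) ` {B. ap (2*i) B}"
    proof
      fix p assume "p \<in> {(A, B). antipalindromic A \<and> antipalindromic B \<and> real (4 ^ i + 1) = real A / real B}"
      then obtain A B where p: "p = (A, B)" and hA: "antipalindromic A" and hB: "antipalindromic B"
        and e: "real (4 ^ i + 1) = real A / real B" by blast
      obtain LA where aA: "ap LA A" using hA antipal_iff by blast
      obtain L where aB: "ap L B" using hB antipal_iff by blast
      have "B > 0" using aB unfolding ap_def by (metis gr0I le_zero_eq power_not_zero zero_neq_numeral)
      then have "real A = real (4^i + 1) * real B" using e by (simp add: field_simps)
      then have "A = (4^i + 1) * B" by (metis of_nat_eq_iff of_nat_mult)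
      then have AB: "A = B * 2^(2*i) + B" using m by (simp add: algebra_simps)
      have "L = 2*i" by (rule main[OF aB aA AB]) (use assms in simp_all)
      then show "p \<in> (\<lambda>B. (B * 2^(2*i) + B, B)) ` {B. ap (2*i) B}" using p AB aB by blast
    qed
  next
    show "(\<lambda>B. (B * 2^(2*i) + B, B)) ` {B. ap (2*i) B}
      \<subseteq> {(A, B). antipalindromic A \<and> antipalindromic B \<and> real (4 ^ i + 1) = real A / real B}"
    proof
      fix p assume "p \<in> (\<lambda>B. (B * 2^(2*i) + B, B)) ` {B. ap (2*i) B}"
      then obtain B where p: "p = (B * 2^(2*i) + B, B)" and aB: "ap (2*i) B" by blast
      have aA: "ap (2*(2*i)) (B * 2^(2*i) + B)" by (rule double_ap[OF aB])
      have "B > 0" using aB unfolding ap_def by (metis gr0I le_zero_eq power_not_zero zero_neq_numeral)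
      have "real (B * 2^(2*i) + B) = real (4^i + 1) * real B" using m by (simp add: algebra_simps)
      then have "real (4 ^ i + 1) = real (B * 2^(2*i) + B) / real B" using \<open>B > 0\<close> by simp
      then show "p \<in> {(A, B). antipalindromic A \<and> antipalindromic B \<and> real (4 ^ i + 1) = real A / real B}"
        using p aA aB antipal_iff by blast
    qed
  qed
  have "inj_on (\<lambda>B. (B * 2^(2*i) + B, B)) {B. ap (2*i) B}" by (rule inj_onI) simp
  then show ?thesis unfolding eqset using count_ap[OF assms] by (simp add: card_image)
qed

end
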